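(* Let $r \in C$. For any generator $v(x\,;\,c) \in V$ (with $x\in\overline{\mathbb D_1}$, $c\in\mathbb C$), \[ T_r v(x\,;\,c) \;=\; v\big( f_r(x)\,;\,\ell_r(x) \big) \,-\, v\big( f_r(0)\,;\,\ell_r(0) \big), \] where each coordinate of the left-hand side is given by an absolutely convergent series. Therefore, we can define the linear operator $T_r: V \to V$ via coordinatewise matrix–vector multiplication.
   Context: $C$ is a finite index set. For each $r\in C$, $B_r=\begin{pmatrix} a_r & b_r\\ c_r& d_r\end{pmatrix}$ is an invertible $2\times 2$ real matrix with all entries strictly positive. Set \[ \begin{pmatrix} \alpha_r & \beta_r \\ \gamma_r & \delta_r \end{pmatrix}=\frac12\begin{pmatrix} a_r-b_r-c_r+d_r & a_r+b_r-c_r-d_r\\ a_r-b_r+c_r-d_r & a_r+b_r+c_r+d_r\end{pmatrix}, \qquad f_r(x)=\frac{\alpha_r x+\beta_r}{\gamma_r x+\delta_r}, \] so $f_r$ is a real Möbius transformation and there is $0<\rho<1$ with $f_r([-1,1])\subset[-\rho,\rho]$ for all $r\in C$; $f_r'$ is its usual derivative. For a Möbius map $g(x)=\frac{ax+b}{cx+d}$ its "transpose" is $g^\top(x)=\frac{ax+c}{bx+d}$; here $f_r^\top([-1,1])\subset(-1,1)$, $\delta_r>0$ and $|f_r^\top(0)|=|\gamma_r/\delta_r|<1$. Define $\ell_r(x)=\mathrm{Log}(\gamma_r x+\delta_r)$ (principal branch, $\mathrm{Log}(1)=0$), holomorphic on a neighborhood of $\overline{\mathbb D_1}$, where $\mathbb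 D_t=\{z\in\mathbb C:|z|<t\}$. For $x\in\overline{\mathbb D_1}$ and $c\in\mathbb C$, $v(x\,;\,c)\in\ell^\infty(\mathbb N_0)$ is the sequence with $(v(x;c))_0=c$ and $(v(x;c))_n=-\frac{(-x)^n}{n}$ for $n\ge1$; $V$ is the complex linear span of all such $v(x\,;\,c)$. $T_r=(b^{(r)}_{k,n})_{k,n\in\mathbb N_0}$ is the infinite matrix with $b^{(r)}_{k,0}=0$ for $k\ge0$, $b^{(r)}_{0,n}=(f_r^\top(0))^n$ for $n\ge1$, and for $k,n\ge1$, \[ b^{(r)}_{k,n}=\sum_{\ell=1}^{\min\{k,n\}}\binom{n}{\ell}\binom{k-1}{\ell-1}(f_r^\top(0))^{n-\ell}(-f_r(0))^{k-\ell}(f_r'(0))^{\ell}, \] acting on sequences by coordinatewise matrix–vector multiplication. *)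

theory Defs
  imports "HOL-Analysis.Analysis"
begin

definition mob :: "real \<Rightarrow> real \<Rightarrow> real \<Rightarrow> real \<Rightarrow> complex \<Rightarrow> complex" where
  "mob a b c d x = (of_real a * x + of_real b) / (of_real c * x + of_real d)"

definition mobT :: "real \<Rightarrow> real \<Rightarrow> real \<Rightarrow> real \<Rightarrow> complex \<Rightarrow> complex" where
  "mobT a b c d x = mob a c b d x"

definition alph :: "real \<Rightarrow> real \<Rightarrow> real \<Rightarrow> real \<Rightarrow> real" where
  "alph a b c d = (a - b - c + d) / 2"
definition bet :: "real \<Rightarrow> real \<Rightarrow> real \<Rightarrow> real \<Rightarrow> real" where
  "bet a b c d = (a + b - c - d) / 2"
definition gam :: "real \<Rightarrow> real \<Rightarrow> real \<Rightarrow> real \<Rightarrow> real" where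
  "gam a b c d = (a - b + c - d) / 2"
definition delt :: "real \<Rightarrow> real \<Rightarrow> real \<Rightarrow> real \<Rightarrow> real" where
  "delt a b c d = (a + b + c + d) / 2"

definition fr :: "real \<Rightarrow> real \<Rightarrow> real \<Rightarrow> real \<Rightarrow> complex \<Rightarrow> complex" where
  "fr a b c d = mob (alph a b c d) (bet a b c d) (gam a b c d) (delt a b c d)"

definition frT :: "real \<Rightarrow> real \<Rightarrow> real \<Rightarrow> real \<Rightarrow> complex \<Rightarrow> complex" where
  "frT a b c d = mobT (alph a b c d) (bet a b c d) (gam a b c d) (delt a b c d)"

definition lr :: "real \<Rightarrow> real \<Rightarrow> real \<Rightarrow> real \<Rightarrow> complex \<Rightarrow> complex" where
  "lr a b c d x = Ln (of_real (gam a b c d) * x + of_real (delt a b c d))"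

definition vseq :: "complex \<Rightarrow> complex \<Rightarrow> nat \<Rightarrow> complex" where
  "vseq x c n = (if n = 0 then c else - ((- x) ^ n) / of_nat n)"

definition Tent :: "real \<Rightarrow> real \<Rightarrow> real \<Rightarrow> real \<Rightarrow> nat \<Rightarrow> nat \<Rightarrow> complex" where
  "Tent a b c d k n =
     (if n = 0 then 0
      else if k = 0 then (frT a b c d 0) ^ n
      else (\<Sum>l = 1..min k n. of_nat (n choose l) * of_nat ((k - 1) choose (l - 1))
              * (frT a b c d 0) ^ (n - l) * (- fr a b c d 0) ^ (k - l)
              * (deriv (fr a b c d) 0) ^ l))"

end

theory Submission
  imports Defs
begin

lemma hockey: "(\<Sum>i\<le>k. ((i + j) choose j)) = (k + Suc j) choose Suc j"
  by (induction k) auto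

lemma nb:
  fixes y :: complex
  shows "norm y < 1 \<Longrightarrow> (\<lambda>m. of_nat ((m + j) choose j) * y ^ m) sums (1 / (1 - y) ^ Suc j)"
proof (induction j arbitrary: y)
  case 0
  then show ?case using geometric_sums[of y] by simp
next
  case (Suc j)
  define a where "a = (\<lambda>m. of_nat ((m + j) choose j) * y ^ m)"
  define b where "b = (\<lambda>m::nat. y ^ m)"
  have ny: "norm (complex_of_real (norm y)) < 1" using Suc.prems by simp
  have "summable (\<lambda>m. of_nat ((m + j) choose j) * (complex_of_real (norm y)) ^ m)"
    using Suc.IH[OF ny] by (rule sums_summable)
  hence "summable (\<lambda>m. complex_of_real (real ((m + j) choose j) * norm y ^ m))"
    by simp
  hence "summable (\<lambda>m. real ((m + j) choose j) * norm y ^ m)"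
    by (simp only: summable_complex_of_real)
  hence sa: "summable (\<lambda>m. norm (a m))" unfolding a_def by (simp add: norm_mult norm_power)
  have sb: "summable (\<lambda>m. norm (b m))" unfolding b_def
    using Suc.prems by (simp add: norm_power summable_geometric)
  have "(\<lambda>k. \<Sum>i\<le>k. a i * b (k - i)) sums ((\<Sum>k. a k) * (\<Sum>k. b k))"
    by (rule Cauchy_product_sums[OF sa sb])
  moreover have "(\<Sum>k. a k) = 1 / (1 - y) ^ Suc j" unfolding a_def using Suc.IH[OF Suc.prems] by (simp add: sums_iff)
  moreover have "(\<Sum>k. b k) = 1 / (1 - y)" unfolding b_def using geometric_sums[OF Suc.prems] by (simp add: sums_iff)
  moreover have "(\<Sum>i\<le>k. a i * b (k - i)) = of_nat ((k + Suc j) choose Suc j) * y ^ k" for k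
  proof -
    have "(\<Sum>i\<le>k. a i * b (k - i)) = (\<Sum>i\<le>k. of_nat ((i + j) choose j) * y ^ k)"
      unfolding a_def b_def by (intro sum.cong refl) (simp add: mult.assoc power_add[symmetric])
    also have "\<dots> = of_nat (\<Sum>i\<le>k. ((i + j) choose j)) * y ^ k"
      by (simp add: sum_distrib_right)
    finally show ?thesis by (simp only: hockey)
  qed
  ultimately show ?case by (simp add: power_Suc mult_ac)
qed

lemma gl_sums:
  fixes q x K :: complex
  assumes qx: "norm (q * x) < 1" and l: "l \<ge> 1"
  defines "g \<equiv> (\<lambda>n. if l \<le> n then of_nat (n choose l) * K * q ^ (n - l) * (- ((- x) ^ n) / of_nat n) else 0)"
  shows "g sums (K * (- ((- x) ^ l) / of_nat l) / (1 + q * x) ^ l) \<and> summable (\<lambda>n. norm (g n))"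
proof -
  obtain l' where l': "l = Suc l'" using l by (cases l) auto
  have nq: "norm (- (q * x)) < 1" using qx by simp
  have key: "g (m + l) = (K * (- ((- x) ^ l) / of_nat l)) * (of_nat ((m + l') choose l') * (- (q * x)) ^ m)" for m
  proof -
    have ab: "of_nat l * (of_nat ((m + l) choose l) :: complex) = of_nat (m + l) * of_nat ((m + l') choose l')"
      using binomial_absorption[of l' "m + l"] unfolding l' by (metis diff_Suc_1 add_Suc_right of_nat_mult)
    have mln: "m + l \<noteq> 0" "l \<noteq> 0" using l by auto
    have ml: "(of_nat (m + l) :: complex) \<noteq> 0" "(of_nat l :: complex) \<noteq> 0"
      using mln by (metis of_nat_eq_0_iff)+
    have pm: "(- (q * x)) ^ m = q ^ m * (- x) ^ m" by (metis mult_minus_right power_mult_distrib)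
    have cd: "(of_nat ((m + l) choose l) :: complex) / of_nat (m + l) = of_nat ((m + l') choose l') / of_nat l"
      using ab ml by (simp add: field_simps)
    have "g (m + l) = (of_nat ((m + l) choose l) / of_nat (m + l)) * K * q ^ m * (- ((- x) ^ (m + l)))"
      unfolding g_def by simp
    also have "\<dots> = (of_nat ((m + l') choose l') / of_nat l) * K * q ^ m * (- ((- x) ^ (m + l)))"
      unfolding cd ..
    also have "\<dots> = (K * (- ((- x) ^ l) / of_nat l)) * (of_nat ((m + l') choose l') * (- (q * x)) ^ m)"
      using pm by (simp add: power_add field_simps)
    finally show ?thesis .
  qed
  have s1: "(\<lambda>m. g (m + l)) sums ((K * (- ((- x) ^ l) / of_nat l)) * (1 / (1 - - (q * x)) ^ Suc l'))"
    unfolding key by (intro sums_mult nb nq)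
  have z: "(\<Sum>i<l. g i) = 0" unfolding g_def by simp
  have "g sums ((K * (- ((- x) ^ l) / of_nat l)) * (1 / (1 - - (q * x)) ^ Suc l'))"
    using s1 z by (simp add: sums_iff_shift)
  moreover have "(1 / (1 - - (q * x)) ^ Suc l') = 1 / (1 + q * x) ^ l"
    unfolding l' by simp
  moreover have "summable (\<lambda>n. norm (g n))"
  proof -
    have nq': "norm (complex_of_real (norm (q * x))) < 1" using qx by simp
    have "summable (\<lambda>m. of_nat ((m + l') choose l') * (complex_of_real (norm (q * x))) ^ m)"
      using nb[OF nq'] by (rule sums_summable)
    hence "summable (\<lambda>m. complex_of_real (real ((m + l') choose l') * norm (q * x) ^ m))"
      by simp
    hence "summable (\<lambda>m. real ((m + l') choose l') * norm (q * x) ^ m)"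
      by (simp only: summable_complex_of_real)
    hence "summable (\<lambda>m. norm (K * (- ((- x) ^ l) / of_nat l)) * (real ((m + l') choose l') * norm (q * x) ^ m))"
      by (rule summable_mult)
    moreover have "norm (g (m + l)) = norm (K * (- ((- x) ^ l) / of_nat l)) * (real ((m + l') choose l') * norm (q * x) ^ m)" for m
      unfolding key norm_mult norm_power norm_minus_cancel norm_of_nat ..
    ultimately have "summable (\<lambda>m. norm (g (m + l)))" by simp
    thus ?thesis using summable_iff_shift[of "\<lambda>n. norm (g n)" l] by blast
  qed
  ultimately show ?thesis by (simp add: divide_inverse)
qed

lemma g1: fixes C P S X L D S' X' :: complex shows "X*S = S'*X' \<Longrightarrow> C*P*S*(-X/L)/D = -((C/L)*P*(S'*X'/D))"
  by (simp add: field_simps)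
lemma g2: fixes C L Ck k P W :: complex shows "- (Ck/k * P * W) = -(Ck*W*P)/k"
  by (simp add: field_simps)

lemma main_k:
  fixes p q s x z :: complex
  assumes qx: "norm (q * x) < 1" and k: "k \<ge> 1"
  defines "T \<equiv> (\<lambda>n. if n = 0 then 0 else (\<Sum>l = 1..min k n. of_nat (n choose l) * of_nat ((k - 1) choose (l - 1))
              * q ^ (n - l) * (- p) ^ (k - l) * s ^ l))"
  shows "summable (\<lambda>n. norm (T n * vseq x z n)) \<and>
         (\<lambda>n. T n * vseq x z n) sums (- ((- (p + s * x / (1 + q * x))) ^ k) / of_nat k + ((- p) ^ k) / of_nat k)"
proof -
  define K where "K = (\<lambda>l. of_nat ((k - 1) choose (l - 1)) * (- p) ^ (k - l) * s ^ l)"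
  define g where "g = (\<lambda>l n. if l \<le> n then of_nat (n choose l) * K l * q ^ (n - l) * (- ((- x) ^ n) / of_nat n) else 0)"
  have dec: "T n * vseq x z n = (\<Sum>l = 1..k. g l n)" for n
  proof (cases "n = 0")
    case True then show ?thesis unfolding T_def g_def by simp
  next
    case False
    have "(\<Sum>l = 1..k. g l n) = (\<Sum>l \<in> {l \<in> {1..k}. l \<le> n}. of_nat (n choose l) * K l * q ^ (n - l) * (- ((- x) ^ n) / of_nat n))"
      unfolding g_def by (simp only: sum.inter_filter[OF finite_atLeastAtMost])
    also have "{l \<in> {1..k}. l \<le> n} = {1..min k n}" by auto
    finally show ?thesis using False unfolding T_def K_def vseq_def
      by (simp add: sum_distrib_right sum_distrib_left sum_divide_distrib sum_negf mult_ac)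
  qed
  have gs: "g l sums (K l * (- ((- x) ^ l) / of_nat l) / (1 + q * x) ^ l) \<and> summable (\<lambda>n. norm (g l n))"
    if "l \<in> {1..k}" for l
    unfolding g_def using gl_sums[OF qx, of l "K l"] that by simp
  have S: "(\<lambda>n. T n * vseq x z n) sums (\<Sum>l = 1..k. K l * (- ((- x) ^ l) / of_nat l) / (1 + q * x) ^ l)"
    unfolding dec using gs by (intro sums_sum) blast
  have N: "summable (\<lambda>n. norm (T n * vseq x z n))"
  proof (rule summable_comparison_test)
    show "\<exists>N. \<forall>n\<ge>N. norm (norm (T n * vseq x z n)) \<le> (\<Sum>l = 1..k. norm (g l n))"
      unfolding dec by (auto intro: norm_sum)
    show "summable (\<lambda>n. \<Sum>l = 1..k. norm (g l n))" using gs by (intro summable_sum) blast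
  qed
  have nz: "1 + q * x \<noteq> 0"
  proof
    assume "1 + q * x = 0" hence "q * x = -1" by (metis add.commute add_eq_0_iff)
    thus False using qx by simp
  qed
  define w where "w = - (s * x / (1 + q * x))"
  have trm: "K l * (- ((- x) ^ l) / of_nat l) / (1 + q * x) ^ l = - (of_nat (k choose l) * w ^ l * (- p) ^ (k - l)) / of_nat k"
    if "l \<in> {1..k}" for l
  proof -
    have l1: "l \<ge> 1" using that by simp
    obtain l' where l': "l = Suc l'" using l1 by (cases l) auto
    have ab: "of_nat l * (of_nat (k choose l) :: complex) = of_nat k * of_nat ((k - 1) choose (l - 1))"
      using binomial_absorption[of l' k] unfolding l' by (metis diff_Suc_1 of_nat_mult)
    have ne: "(of_nat l :: complex) \<noteq> 0" "(of_nat k :: complex) \<noteq> 0" using that k by auto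
    have cd: "(of_nat ((k - 1) choose (l - 1)) :: complex) / of_nat l = of_nat (k choose l) / of_nat k"
      using ab ne by (simp add: field_simps)
    have wl: "w ^ l = (- s) ^ l * x ^ l / (1 + q * x) ^ l"
      unfolding w_def by (metis mult_minus_left power_divide power_mult_distrib minus_divide_left)
    have xs: "(- x) ^ l * s ^ l = (- s) ^ l * x ^ l"
      by (metis mult.commute mult_minus_left mult_minus_right power_mult_distrib)
    have "K l * (- ((- x) ^ l) / of_nat l) / (1 + q * x) ^ l
       = - ((of_nat ((k - 1) choose (l - 1)) / of_nat l) * (- p) ^ (k - l) * ((- s) ^ l * x ^ l / (1 + q * x) ^ l))"
      unfolding K_def by (rule g1[OF xs])
    also have "\<dots> = - (of_nat (k choose l) * w ^ l * (- p) ^ (k - l)) / of_nat k"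
      unfolding cd wl[symmetric] by (rule g2)
    finally show ?thesis .
  qed
  have "(\<Sum>l = 1..k. K l * (- ((- x) ^ l) / of_nat l) / (1 + q * x) ^ l)
      = - (\<Sum>l = 1..k. of_nat (k choose l) * w ^ l * (- p) ^ (k - l)) / of_nat k"
    using trm by (simp add: sum_divide_distrib sum_negf)
  also have "(\<Sum>l = 1..k. of_nat (k choose l) * w ^ l * (- p) ^ (k - l)) = (w + - p) ^ k - (- p) ^ k"
  proof -
    have "(w + - p) ^ k = (\<Sum>l\<le>k. of_nat (k choose l) * w ^ l * (- p) ^ (k - l))" by (rule binomial_ring)
    also have "\<dots> = (\<Sum>l\<in>insert 0 {1..k}. of_nat (k choose l) * w ^ l * (- p) ^ (k - l))"
      by (intro sum.cong refl) auto
    also have "\<dots> = (- p) ^ k + (\<Sum>l = 1..k. of_nat (k choose l) * w ^ l * (- p) ^ (k - l))"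
      by (subst sum.insert) auto
    finally show ?thesis by simp
  qed
  also have "w + - p = - (p + s * x / (1 + q * x))" unfolding w_def by simp
  finally have "(\<Sum>l = 1..k. K l * (- ((- x) ^ l) / of_nat l) / (1 + q * x) ^ l)
      = - ((- (p + s * x / (1 + q * x))) ^ k - (- p) ^ k) / of_nat k" .
  also have "\<dots> = - ((- (p + s * x / (1 + q * x))) ^ k) / of_nat k + ((- p) ^ k) / of_nat k"
    by (simp add: diff_divide_distrib)
  finally have E: "(\<Sum>l = 1..k. K l * (- ((- x) ^ l) / of_nat l) / (1 + q * x) ^ l)
      = - ((- (p + s * x / (1 + q * x))) ^ k) / of_nat k + ((- p) ^ k) / of_nat k" .
  show ?thesis using N S unfolding E by blast
qed

lemma fxal: fixes A B G D x :: complex assumes D0: "D \<noteq> 0" and GD0: "G * x + D \<noteq> 0"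
  shows "B / D + (A * D - B * G) / D ^ 2 * x / (1 + G / D * x) = (A * x + B) / (G * x + D)"
proof -
  have e1: "1 + G / D * x = (G * x + D) / D" using D0 by (simp add: field_simps)
  have e2: "(A * D - B * G) / D ^ 2 * x / ((G * x + D) / D) = (A * D - B * G) * x / (D * (G * x + D))"
    using D0 GD0 by (simp add: power2_eq_square)
  have e3: "B / D + (A * D - B * G) * x / (D * (G * x + D)) = (B * (G * x + D) + (A * D - B * G) * x) / (D * (G * x + D))"
    using D0 GD0 by (simp add: add_divide_distrib)
  have e4: "B * (G * x + D) + (A * D - B * G) * x = D * (A * x + B)" by (simp add: algebra_simps)
  show ?thesis unfolding e1 e2 e3 e4 using D0 by simp
qed

theorem lemma3p9:
  fixes a b c d :: real and x z :: complex
  assumes pos: "a > 0" "b > 0" "c > 0" "d > 0"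
    and inv: "a * d - b * c \<noteq> 0"
    and rho: "\<exists>\<rho>::real. 0 < \<rho> \<and> \<rho> < 1 \<and>
               (\<forall>t::real. \<bar>t\<bar> \<le> 1 \<longrightarrow>
                  fr a b c d (of_real t) \<in> \<real> \<and> \<bar>Re (fr a b c d (of_real t))\<bar> \<le> \<rho>)"
    and transp: "\<forall>t::real. \<bar>t\<bar> \<le> 1 \<longrightarrow>
                  frT a b c d (of_real t) \<in> \<real> \<and> \<bar>Re (frT a b c d (of_real t))\<bar> < 1"
    and dpos: "delt a b c d > 0"
    and gd: "\<bar>gam a b c d / delt a b c d\<bar> < 1"
    and x: "cmod x \<le> 1"
  shows "\<forall>k. summable (\<lambda>n. norm (Tent a b c d k n * vseq x z n)) \<and>
             (\<Sum>n. Tent a b c d k n * vseq x z n) =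
               vseq (fr a b c d x) (lr a b c d x) k - vseq (fr a b c d 0) (lr a b c d 0) k"
proof
  fix k
  define A where "A = complex_of_real (alph a b c d)"
  define B where "B = complex_of_real (bet a b c d)"
  define G where "G = complex_of_real (gam a b c d)"
  define D where "D = complex_of_real (delt a b c d)"
  define p where "p = fr a b c d 0"
  define q where "q = frT a b c d 0"
  define s where "s = deriv (fr a b c d) 0"
  have frx: "fr a b c d w = (A * w + B) / (G * w + D)" for w
    unfolding fr_def mob_def A_def B_def G_def D_def ..
  have D0: "D \<noteq> 0" using dpos unfolding D_def by simp
  have pv: "p = B / D" unfolding p_def frx by simp
  have qv: "q = G / D" unfolding q_def frT_def mobT_def mob_def G_def D_def by simp
  have "((\<lambda>w. (A * w + B) / (G * w + D)) has_field_derivative (A * D - B * G) / D ^ 2) (at 0)"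
    using D0 by (auto intro!: derivative_eq_intros simp: field_simps power2_eq_square)
  hence sv: "s = (A * D - B * G) / D ^ 2" unfolding s_def frx[abs_def] by (rule DERIV_imp_deriv)
  have nq: "norm q < 1" unfolding qv G_def D_def using gd by (simp add: norm_divide)
  have qx: "norm (q * x) < 1"
  proof -
    have "norm (q * x) = norm q * norm x" by (simp add: norm_mult)
    also have "\<dots> \<le> norm q" using x by (simp add: mult_left_le)
    finally show ?thesis using nq by simp
  qed
  have nz: "1 + q * x \<noteq> 0"
  proof
    assume "1 + q * x = 0" hence "q * x = -1" by (metis add.commute add_eq_0_iff)
    thus False using qx by simp
  qed
  have GD: "G * x + D = D * (1 + q * x)" unfolding qv using D0 by (simp add: field_simps)
  have GD0: "G * x + D \<noteq> 0" unfolding GD using D0 nz by simp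
  show "summable (\<lambda>n. norm (Tent a b c d k n * vseq x z n)) \<and>
             (\<Sum>n. Tent a b c d k n * vseq x z n) =
               vseq (fr a b c d x) (lr a b c d x) k - vseq (fr a b c d 0) (lr a b c d 0) k"
  proof (cases "k = 0")
    case True
    have pmx: "(- (q * x)) ^ n = q ^ n * (- x) ^ n" for n by (metis mult_minus_right power_mult_distrib)
    have eq: "Tent a b c d k n * vseq x z n = - ((- (q * x)) ^ n) / of_nat n" for n
      unfolding True Tent_def vseq_def q_def[symmetric]
      using pmx[of n] by simp
    have "(\<lambda>n. - ((- (q * x)) ^ n) / of_nat n) sums ln (1 + q * x)"
      by (rule Ln_series'[OF qx])
    moreover have "summable (\<lambda>n. norm (- ((- (q * x)) ^ n) / (of_nat n :: complex)))"
    proof (rule summable_comparison_test)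
      show "\<exists>N. \<forall>n\<ge>N. norm (norm (- ((- (q * x)) ^ n) / (of_nat n :: complex))) \<le> norm (q * x) ^ n"
        by (auto simp: norm_divide norm_power divide_le_eq intro!: exI[of _ 1] mult_le_cancel_left1[THEN iffD2])
      show "summable (\<lambda>n. norm (q * x) ^ n)" using qx by (simp add: summable_geometric)
    qed
    moreover have "lr a b c d x - lr a b c d 0 = Ln (1 + q * x)"
    proof -
      have "lr a b c d x = Ln (complex_of_real (delt a b c d) * (1 + q * x))"
        unfolding lr_def GD[unfolded D_def G_def] ..
      also have "\<dots> = ln (delt a b c d) + Ln (1 + q * x)"
        using dpos nz by (simp add: Ln_times_of_real Ln_of_real)
      finally show ?thesis unfolding lr_def using dpos by (simp add: Ln_of_real)
    qed
    ultimately show ?thesis unfolding eq using True by (simp add: sums_iff vseq_def)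
  next
    case False
    hence k1: "k \<ge> 1" by simp
    have Teq: "Tent a b c d k n = (if n = 0 then 0 else (\<Sum>l = 1..min k n. of_nat (n choose l) * of_nat ((k - 1) choose (l - 1))
              * q ^ (n - l) * (- p) ^ (k - l) * s ^ l))" for n
      unfolding Tent_def p_def q_def s_def using False by simp
    have fx: "fr a b c d x = p + s * x / (1 + q * x)"
    proof -
      have "p + s * x / (1 + q * x) = B / D + (A * D - B * G) / D ^ 2 * x / (1 + G / D * x)"
        unfolding pv sv qv ..
      also have "\<dots> = (A * x + B) / (G * x + D)"
        by (rule fxal[OF D0 GD0])
      finally show ?thesis unfolding frx by simp
    qed
    have f0: "fr a b c d 0 = p" unfolding p_def ..
    from main_k[OF qx k1, of p s z] show ?thesis
      unfolding Teq[symmetric] fx f0 vseq_def using False by (simp add: sums_iff)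
  qed
qed
end
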